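(* Let $E$ be a computable abelian group with computable subgroups $A,B,G,H$ such that $E = A\oplus G = B\oplus H$ (internal direct sums), where $A$ and $B$ are isomorphic and cyclic, and let $D=G\cap H$. Let $u\in G$ and $v\in H$ be such that $G=\langle u\rangle\oplus D$ and $H=\langle v\rangle\oplus D$. Then, uniformly in indices for $E,A,B,G,H$ and in $u$ and $v$, one can compute (an index for) a computable isomorphism between $G$ and $H$.
   Context: A computable group is given by an index for a program computing its atomic diagram (domain a subset of $\omega$); a computable subgroup is one whose underlying set is computable, given by an index of its characteristic function. *)

theory Defs
  imports "HOL-Algebra.Algebra" "HOL-Library.Nat_Bijection"
begin

datatype recf =
    Zero
  | Succ
  | Proj nat
  | Comp recf "recf list"
  | Prim recf recf
  | Mn recf

inductive eval :: "recf \<Rightarrow> nat list \<Rightarrow> nat \<Rightarrow> bool" where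
  eval_Zero: "eval Zero xs 0"
| eval_Succ: "eval Succ (x # xs) (Suc x)"
| eval_Proj: "i < length xs \<Longrightarrow> eval (Proj i) xs (xs ! i)"
| eval_Comp: "list_all2 (\<lambda>g y. eval g xs y) gs ys \<Longrightarrow> eval f ys z \<Longrightarrow> eval (Comp f gs) xs z"
| eval_Prim0: "eval f xs y \<Longrightarrow> eval (Prim f g) (0 # xs) y"
| eval_PrimS: "eval (Prim f g) (n # xs) y \<Longrightarrow> eval g (n # y # xs) z \<Longrightarrow> eval (Prim f g) (Suc n # xs) z"
| eval_Mn: "eval f (n # xs) 0 \<Longrightarrow> (\<forall>m<n. \<exists>y. eval f (m # xs) y \<and> 0 < y) \<Longrightarrow> eval (Mn f) xs n"

fun code :: "recf \<Rightarrow> nat" where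
  "code Zero = prod_encode (0, 0)"
| "code Succ = prod_encode (1, 0)"
| "code (Proj i) = prod_encode (2, i)"
| "code (Comp f gs) = prod_encode (3, prod_encode (code f, list_encode (map code gs)))"
| "code (Prim f g) = prod_encode (4, prod_encode (code f, code g))"
| "code (Mn f) = prod_encode (5, code f)"

definition phi :: "nat \<Rightarrow> nat list \<Rightarrow> nat \<Rightarrow> bool" where
  "phi e xs y \<longleftrightarrow> (\<exists>p. code p = e \<and> eval p xs y)"

definition char_index :: "nat \<Rightarrow> nat set \<Rightarrow> bool" where
  "char_index e S \<longleftrightarrow> (\<forall>x. phi e [x] (if x \<in> S then 1 else 0))"

text \<open>e is an index for the (atomic diagram of the) group structure E with domain a subset
  of \<omega>: e codes a pair (d, m) where d decides the domain and m decides the relation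
  x \<otimes> y = z on elements of the domain.\<close>
definition group_index :: "nat \<Rightarrow> nat monoid \<Rightarrow> bool" where
  "group_index e E \<longleftrightarrow>
     char_index (fst (prod_decode e)) (carrier E) \<and>
     (\<forall>x y z. phi (snd (prod_decode e)) [x, y, z]
        (if x \<in> carrier E \<and> y \<in> carrier E \<and> z \<in> carrier E \<and> x \<otimes>\<^bsub>E\<^esub> y = z then 1 else 0))"

definition internal_direct_sum :: "('a, 'b) monoid_scheme \<Rightarrow> 'a set \<Rightarrow> 'a set \<Rightarrow> bool" where
  "internal_direct_sum E A G \<longleftrightarrow>
     subgroup A E \<and> subgroup G E \<and> A \<inter> G = {\<one>\<^bsub>E\<^esub>} \<and> A <#>\<^bsub>E\<^esub> G = carrier E"

end

theory Submission
  imports Defs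
begin

lemma comp1: "eval g xs y \<Longrightarrow> eval f [y] z \<Longrightarrow> eval (Comp f [g]) xs z"
  by (rule eval_Comp[of _ _ "[y]"]) auto
lemma comp2: "eval g1 xs y1 \<Longrightarrow> eval g2 xs y2 \<Longrightarrow> eval f [y1,y2] z \<Longrightarrow> eval (Comp f [g1,g2]) xs z"
  by (rule eval_Comp[of _ _ "[y1,y2]"]) auto
lemma comp3: "eval g1 xs y1 \<Longrightarrow> eval g2 xs y2 \<Longrightarrow> eval g3 xs y3 \<Longrightarrow> eval f [y1,y2,y3] z
   \<Longrightarrow> eval (Comp f [g1,g2,g3]) xs z"
  by (rule eval_Comp[of _ _ "[y1,y2,y3]"]) auto
lemma comp4: "eval g1 xs y1 \<Longrightarrow> eval g2 xs y2 \<Longrightarrow> eval g3 xs y3 \<Longrightarrow> eval g4 xs y4 \<Longrightarrow> eval f [y1,y2,y3,y4] z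
   \<Longrightarrow> eval (Comp f [g1,g2,g3,g4]) xs z"
  by (rule eval_Comp[of _ _ "[y1,y2,y3,y4]"]) auto

lemma proj: "i < length xs \<Longrightarrow> y = xs ! i \<Longrightarrow> eval (Proj i) xs y"
  using eval_Proj by simp

lemma succ1: "eval Succ [x] (Suc x)" using eval_Succ[of x "[]"] .

fun K :: "nat \<Rightarrow> recf" where
  "K 0 = Zero" | "K (Suc n) = Comp Succ [K n]"

lemma eval_K: "eval (K n) xs n"
  by (induction n) (auto intro: eval.intros comp1)

definition ADD :: recf where "ADD = Prim (Proj 0) (Comp Succ [Proj 1])"
lemma eval_ADD: "eval ADD [a, b] (a + b)"
proof (induction a)
  case 0 then show ?case unfolding ADD_def by (auto intro!: eval_Prim0 proj)
next
  case (Suc a)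
  show ?case unfolding ADD_def
    by (rule eval_PrimS[OF Suc[unfolded ADD_def]]) (auto intro!: comp1 proj eval_Succ[of _ "[]", simplified])
qed

definition PRED :: recf where "PRED = Prim Zero (Proj 0)"
lemma eval_PRED: "eval PRED [a] (a - 1)"
proof (induction a)
  case 0 then show ?case unfolding PRED_def by (auto intro!: eval_Prim0 eval_Zero)
next
  case (Suc a)
  show ?case unfolding PRED_def
    by (rule eval_PrimS[OF Suc[unfolded PRED_def]]) (auto intro!: proj)
qed

definition MONUS :: recf where "MONUS = Prim (Proj 0) (Comp PRED [Proj 1])"
lemma eval_MONUS: "eval MONUS [b, a] (a - b)"
proof (induction b)
  case 0 then show ?case unfolding MONUS_def by (auto intro!: eval_Prim0 proj)
next
  case (Suc b)
  show ?case unfolding MONUS_def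
    by (rule eval_PrimS[OF Suc[unfolded MONUS_def]]) (auto intro!: comp1 proj eval_PRED[of "a - b", simplified])
qed

definition TRI :: recf where "TRI = Prim Zero (Comp ADD [Comp Succ [Proj 0], Proj 1])"
lemma eval_TRI: "eval TRI [s] (triangle s)"
proof (induction s)
  case 0 then show ?case unfolding TRI_def by (auto intro!: eval_Prim0 eval_Zero)
next
  case (Suc s)
  have e: "eval ADD [Suc s, triangle s] (Suc (triangle s + s))" using eval_ADD[of "Suc s" "triangle s"] by (simp add: add.commute)
  show ?case unfolding TRI_def
    by (rule eval_PrimS[OF Suc[unfolded TRI_def]])
      (auto intro!: comp1 comp2 proj e succ1)
qed

definition PE :: recf where "PE = Comp ADD [Comp TRI [Comp ADD [Proj 0, Proj 1]], Proj 0]"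
lemma eval_PE: "eval PE [a, b] (prod_encode (a, b))"
  unfolding PE_def prod_encode_def
  by (auto intro!: comp1 comp2 proj eval_ADD eval_TRI)

definition NOT :: recf where "NOT = Prim (K 1) Zero"
lemma eval_NOT: "eval NOT [c] (if c = 0 then 1 else 0)"
proof (cases c)
  case 0 then show ?thesis unfolding NOT_def by (auto intro!: eval_Prim0 eval_K[of 1, simplified])
next
  case (Suc n)
  have "eval NOT [n] (if n = 0 then 1 else 0)"
  proof (induction n)
    case 0 then show ?case unfolding NOT_def by (auto intro!: eval_Prim0 eval_K[of 1, simplified])
  next
    case (Suc n)
    show ?case unfolding NOT_def by (rule eval_PrimS[OF Suc[unfolded NOT_def]]) (auto intro: eval_Zero)
  qed
  then show ?thesis unfolding NOT_def Suc by (auto intro!: eval_PrimS eval_Zero)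
qed

definition COND :: recf where "COND = Prim (Proj 1) (Proj 2)"
lemma eval_COND: "eval COND [c, a, b] (if c = 0 then b else a)"
proof (induction c)
  case 0 then show ?case unfolding COND_def by (auto intro!: eval_Prim0 proj)
next
  case (Suc c)
  show ?case unfolding COND_def by (rule eval_PrimS[OF Suc[unfolded COND_def]]) (auto intro!: proj)
qed

lemma code_inj: "code p = code q \<Longrightarrow> p = q"
proof (induction p arbitrary: q)
  case (Comp f gs)
  then show ?case
  proof (cases q)
    case (Comp f' gs')
    with Comp.prems have 1: "code f = code f'" and 2: "map code gs = map code gs'"
      by (auto simp: list_encode_eq)
    have "gs = gs'" using 2 Comp.IH(2)
    proof (induction gs arbitrary: gs')
      case Nil then show ?case by simp
    next
      case (Cons g gs) then show ?case by (cases gs') auto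
    qed
    with 1 Comp.IH(1) show ?thesis using Comp by auto
  qed auto
next
  case Zero then show ?case by (cases q) auto
next
  case Succ then show ?case by (cases q) auto
next
  case (Proj x) then show ?case by (cases q) auto
next
  case (Prim p1 p2) then show ?case by (cases q) auto
next
  case (Mn p) then show ?case by (cases q) auto
qed

datatype tmpl = TZero | TSucc | TProj nat | TComp tmpl "tmpl list" | TPrim tmpl tmpl | TMn tmpl | THole nat

fun inst :: "(nat \<Rightarrow> recf) \<Rightarrow> tmpl \<Rightarrow> recf" where
  "inst s TZero = Zero"
| "inst s TSucc = Succ"
| "inst s (TProj i) = Proj i"
| "inst s (TComp f gs) = Comp (inst s f) (map (inst s) gs)"
| "inst s (TPrim f g) = Prim (inst s f) (inst s g)"
| "inst s (TMn f) = Mn (inst s f)"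
| "inst s (THole i) = s i"

fun emb :: "recf \<Rightarrow> tmpl" where
  "emb Zero = TZero"
| "emb Succ = TSucc"
| "emb (Proj i) = TProj i"
| "emb (Comp f gs) = TComp (emb f) (map emb gs)"
| "emb (Prim f g) = TPrim (emb f) (emb g)"
| "emb (Mn f) = TMn (emb f)"

lemma inst_emb[simp]: "inst s (emb p) = p"
  by (induction p) (auto simp: map_idI)

fun holes :: "tmpl \<Rightarrow> nat set" where
  "holes (TComp f gs) = holes f \<union> (\<Union>g\<in>set gs. holes g)"
| "holes (TPrim f g) = holes f \<union> holes g"
| "holes (TMn f) = holes f"
| "holes (THole i) = {i}"
| "holes _ = {}"

fun LE :: "recf list \<Rightarrow> recf" where
  "LE [] = Zero"
| "LE (g # gs) = Comp Succ [Comp PE [g, LE gs]]"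

lemma eval_LE: "list_all2 (\<lambda>g y. eval g xs y) gs ys \<Longrightarrow> eval (LE gs) xs (list_encode ys)"
proof (induction gs arbitrary: ys)
  case Nil then show ?case by (auto intro: eval_Zero)
next
  case (Cons g gs)
  then obtain y ys' where ys: "ys = y # ys'" and "eval g xs y" "list_all2 (\<lambda>g y. eval g xs y) gs ys'"
    by (cases ys) auto
  with Cons.IH show ?case by (auto intro!: comp1 comp2 succ1 eval_PE)
qed

fun cp :: "tmpl \<Rightarrow> recf" where
  "cp TZero = K (code Zero)"
| "cp TSucc = K (code Succ)"
| "cp (TProj i) = K (code (Proj i))"
| "cp (TComp f gs) = Comp PE [K 3, Comp PE [cp f, LE (map cp gs)]]"
| "cp (TPrim f g) = Comp PE [K 4, Comp PE [cp f, cp g]]"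
| "cp (TMn f) = Comp PE [K 5, cp f]"
| "cp (THole i) = Proj i"

lemma eval_cp: "(\<forall>i\<in>holes t. i < length hs \<and> hs ! i = code (s i)) \<Longrightarrow> eval (cp t) hs (code (inst s t))"
proof (induction t)
  case (TComp f gs)
  have "list_all2 (\<lambda>g y. eval g hs y) (map cp gs) (map code (map (inst s) gs))"
    unfolding list_all2_conv_all_nth
  proof (intro conjI allI impI)
    fix i assume i: "i < length (map cp gs)"
    then have m: "gs ! i \<in> set gs" by simp
    then have "holes (gs ! i) \<subseteq> holes (TComp f gs)" by auto
    with TComp.prems TComp.IH(2)[OF m] i show "eval (map cp gs ! i) hs (map code (map (inst s) gs) ! i)"
      by (metis (no_types, lifting) length_map nth_map subsetD)
  qed simp
  then have "eval (LE (map cp gs)) hs (list_encode (map code (map (inst s) gs)))" by (rule eval_LE)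
  with TComp show ?case by (auto intro!: comp2 eval_PE eval_K)
qed (auto intro!: comp2 eval_PE eval_K proj)

definition CK :: recf where
  "CK = Prim (K 0) (Comp PE [K 3, Comp PE [K (code Succ), Comp Succ [Comp PE [Proj 1, Zero]]]])"

lemma eval_CK: "eval CK [n] (code (K n))"
proof (induction n)
  case 0
  have "code (K 0) = 0" by (simp add: prod_encode_def)
  then show ?case unfolding CK_def by (metis eval_Prim0 eval_K)
next
  case (Suc n)
  show ?case unfolding CK_def
    by (rule eval_PrimS[OF Suc[unfolded CK_def]]) (auto intro!: comp1 comp2 eval_PE eval_K proj succ1 eval_Zero)
qed

lemma eval_Mn_val:
  assumes "\<And>z. eval f (z # xs) (g z)" "g n = 0" "\<And>m. m < n \<Longrightarrow> 0 < g m"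
  shows "eval (Mn f) xs n"
proof (rule eval_Mn)
  show "eval f (n # xs) 0" using assms(1)[of n] assms(2) by simp
  show "\<forall>m<n. \<exists>y. eval f (m # xs) y \<and> 0 < y" using assms(1,3) by blast
qed

lemma triangle_mono: "m \<le> n \<Longrightarrow> triangle m \<le> triangle n"
  unfolding triangle_def by (intro div_le_mono mult_le_mono) auto

definition SNDDEC :: recf where
  "SNDDEC = Comp (Comp MONUS [Comp MONUS [Comp TRI [Proj 0], Proj 1], Proj 0])
     [Mn (Comp MONUS [Comp TRI [Comp Succ [Proj 0]], Comp Succ [Proj 1]]), Proj 0]"

lemma eval_SNDDEC: "eval SNDDEC [e] (snd (prod_decode e))"
proof -
  obtain a b where ab: "prod_decode e = (a, b)" by force
  then have e: "e = triangle (a + b) + a"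
  proof -
    have "prod_encode (prod_decode e) = e" by (rule prod_decode_inverse)
    then show ?thesis using ab by (simp add: prod_encode_def)
  qed
  define s where "s = a + b"
  have body: "eval (Comp MONUS [Comp TRI [Comp Succ [Proj 0]], Comp Succ [Proj 1]]) (z # [e])
       (Suc e - triangle (Suc z))" for z
    by (rule comp2[OF comp1[OF comp1[OF proj succ1] eval_TRI] comp1[OF proj succ1] eval_MONUS]; simp)
  have mn: "eval (Mn (Comp MONUS [Comp TRI [Comp Succ [Proj 0]], Comp Succ [Proj 1]])) [e] s"
  proof (rule eval_Mn_val[OF body])
    show "Suc e - triangle (Suc s) = 0" using e s_def by simp
    fix m assume "m < s"
    then have "triangle (Suc m) \<le> triangle s" by (intro triangle_mono) simp
    then show "0 < Suc e - triangle (Suc m)" using e s_def by simp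
  qed
  have "eval SNDDEC [e] (s - (e - triangle s))"
    unfolding SNDDEC_def
    apply (rule comp2[OF mn])
     apply (rule proj; simp)
    apply (rule comp2[OF comp2[OF comp1[OF proj eval_TRI] proj eval_MONUS] proj eval_MONUS]; simp)
    done
  moreover have "s - (e - triangle s) = b" using e s_def by simp
  ultimately show ?thesis using ab by simp
qed

lemma search_unique:
  assumes "\<And>z. eval f (z # xs) (if P z then 0 else 1)" "P z0" "\<And>z. P z \<Longrightarrow> z = z0"
  shows "eval (Mn f) xs z0"
proof (rule eval_Mn_val[OF assms(1)])
  show "(if P z0 then 0 else 1) = (0::nat)" using assms(2) by simp
  fix m assume "m < z0"
  then have "\<not> P m" using assms(3) by fastforce
  then show "0 < (if P m then 0 else 1::nat)" by simp
qed

definition "NOTt = emb NOT"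
definition "CONDt = emb COND"
definition "Wt = TMn (TComp NOTt [TComp (THole 0) [TProj 0, TProj 3, TProj 2]])"
definition "W't = TMn (TComp NOTt [TComp (THole 0) [TProj 0, TProj 2, TProj 3]])"
definition "POWt = TPrim (TProj 0) (TMn (TComp NOTt [TComp (THole 0) [TProj 2, TProj 4, TProj 0]]))"
definition "At = TComp POWt [TProj 0, TProj 1, TProj 2]"
definition "Bt = TComp POWt [TProj 0, TProj 1, TProj 3]"
definition "St = TComp CONDt [TComp (THole 1) [At], TZero, TComp NOTt [TComp (THole 1) [Bt]]]"
definition "OUTt = TComp CONDt [TComp (THole 1) [At], At, Bt]"
definition "MAIN2t = TComp OUTt [TMn St, TProj 0, TProj 1, TProj 2]"
definition "MAINt = TComp MAIN2t [TProj 0, Wt, W't]"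
definition "Tt = TComp MAINt [TProj 0, THole 2, THole 3]"

lemma holes_Tt: "holes Tt \<subseteq> {0,1,2,3}"
proof -
  have e: "holes (emb p) = {}" for p by (induction p) auto
  show ?thesis
    unfolding Tt_def MAINt_def MAIN2t_def OUTt_def St_def At_def Bt_def POWt_def Wt_def W't_def
      NOTt_def CONDt_def by (auto simp: e)
qed

locale progctx =
  fixes E :: "nat monoid" (structure) and H :: "nat set" and s :: "nat \<Rightarrow> recf" and u v :: nat
  assumes grp: "group E"
    and s0: "\<And>a b c. eval (s 0) [a, b, c]
        (if a \<in> carrier E \<and> b \<in> carrier E \<and> c \<in> carrier E \<and> a \<otimes>\<^bsub>E\<^esub> b = c then 1 else 0)"
    and s1: "\<And>y. eval (s 1) [y] (if y \<in> H then 1 else 0)"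
    and s2: "s 2 = K u" and s3: "s 3 = K v"
    and uc: "u \<in> carrier E" and vc: "v \<in> carrier E"
begin

lemma ifif: "(if (if P then 1 else 0) = (0::nat) then 1 else (0::nat)) = (if P then 0 else 1)" by simp

lemma eval_N0:
  assumes "i < length xs" "j < length xs" "k < length xs"
  shows "eval (inst s (TComp NOTt [TComp (THole 0) [TProj i, TProj j, TProj k]])) xs
    (if xs!i \<in> carrier E \<and> xs!j \<in> carrier E \<and> xs!k \<in> carrier E \<and> xs!i \<otimes>\<^bsub>E\<^esub> xs!j = xs!k then 0 else 1)"
proof -
  have "eval (inst s (TComp NOTt [TComp (THole 0) [TProj i, TProj j, TProj k]])) xs
    (if (if xs!i \<in> carrier E \<and> xs!j \<in> carrier E \<and> xs!k \<in> carrier E \<and> xs!i \<otimes>\<^bsub>E\<^esub> xs!j = xs!k then 1 else 0) = (0::nat) then 1 else 0)"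
    unfolding NOTt_def inst.simps list.map inst_emb
    by (rule comp1[OF comp3[OF proj proj proj s0] eval_NOT]) (use assms in auto)
  then show ?thesis unfolding ifif .
qed

lemma eval_W: "eval (inst s Wt) [x, u, v] (u \<otimes>\<^bsub>E\<^esub> inv\<^bsub>E\<^esub> v)"
proof -
  interpret group E by (rule grp)
  show ?thesis unfolding Wt_def inst.simps(6)
  proof (rule search_unique)
    fix z
    show "eval (inst s (TComp NOTt [TComp (THole 0) [TProj 0, TProj 3, TProj 2]])) (z # [x, u, v])
      (if z \<in> carrier E \<and> z \<otimes> v = u then 0 else 1)"
      using eval_N0[of 0 "z # [x, u, v]" 3 2] uc vc by simp
  next
    show "u \<otimes> inv v \<in> carrier E \<and> u \<otimes> inv v \<otimes> v = u" using uc vc by (simp add: m_assoc)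
  next
    fix z assume "z \<in> carrier E \<and> z \<otimes> v = u"
    then show "z = u \<otimes> inv v" using uc vc by (metis inv_solve_right)
  qed
qed

lemma eval_W': "eval (inst s W't) [x, u, v] (v \<otimes>\<^bsub>E\<^esub> inv\<^bsub>E\<^esub> u)"
proof -
  interpret group E by (rule grp)
  show ?thesis unfolding W't_def inst.simps(6)
  proof (rule search_unique)
    fix z
    show "eval (inst s (TComp NOTt [TComp (THole 0) [TProj 0, TProj 2, TProj 3]])) (z # [x, u, v])
      (if z \<in> carrier E \<and> z \<otimes> u = v then 0 else 1)"
      using eval_N0[of 0 "z # [x, u, v]" 2 3] uc vc by simp
  next
    show "v \<otimes> inv u \<in> carrier E \<and> v \<otimes> inv u \<otimes> u = v" using uc vc by (simp add: m_assoc)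
  next
    fix z assume "z \<in> carrier E \<and> z \<otimes> u = v"
    then show "z = v \<otimes> inv u" using uc vc by (metis inv_solve_right)
  qed
qed

lemma eval_POW:
  assumes "x \<in> carrier E" "w \<in> carrier E"
  shows "eval (inst s POWt) [n, x, w] (x \<otimes>\<^bsub>E\<^esub> w [^]\<^bsub>E\<^esub> n)"
proof -
  interpret group E by (rule grp)
  show ?thesis
  proof (induction n)
    case 0 then show ?case unfolding POWt_def inst.simps(3,5,6)
      by (rule eval_Prim0) (rule proj, use assms in auto)
  next
    case (Suc n)
    let ?y = "x \<otimes> w [^] n"
    have yc: "?y \<in> carrier E" using assms by simp
    have st: "eval (Mn (inst s (TComp NOTt [TComp (THole 0) [TProj 2, TProj 4, TProj 0]]))) [n, ?y, x, w] (?y \<otimes> w)"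
    proof (rule search_unique)
      fix z
      show "eval (inst s (TComp NOTt [TComp (THole 0) [TProj 2, TProj 4, TProj 0]])) (z # [n, ?y, x, w])
        (if z \<in> carrier E \<and> ?y \<otimes> w = z then 0 else 1)"
        using eval_N0[of 2 "z # [n, ?y, x, w]" 4 0] yc assms by simp
    qed (use yc assms in auto)
    have "?y \<otimes> w = x \<otimes> w [^] Suc n" using assms by (simp add: m_assoc nat_pow_Suc)
    with st show ?case unfolding POWt_def inst.simps(3,5,6)
      by (intro eval_PrimS[OF Suc[unfolded POWt_def inst.simps(3,5,6)]]) simp
  qed
qed

lemma eval_T:
  assumes xc: "x \<in> carrier E"
    and ex: "\<exists>n::nat. x \<otimes> (u \<otimes> inv v) [^] n \<in> H \<or> x \<otimes> (v \<otimes> inv u) [^] n \<in> H"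
  shows "\<exists>(n::nat) y. eval (inst s Tt) [x] y \<and> y \<in> H \<and>
     (y = x \<otimes> (u \<otimes> inv v) [^] n \<or> y = x \<otimes> (v \<otimes> inv u) [^] n)"
proof -
  interpret group E by (rule grp)
  define w where "w = u \<otimes> inv v"
  define w' where "w' = v \<otimes> inv u"
  have wc: "w \<in> carrier E" "w' \<in> carrier E" using uc vc w_def w'_def by auto
  define a where "a n = x \<otimes> w [^] n" for n :: nat
  define b where "b n = x \<otimes> w' [^] n" for n :: nat
  define Q where "Q n = (a n \<in> H \<or> b n \<in> H)" for n
  have hA: "eval (Comp (inst s (THole 1)) [inst s At]) [n, x, w, w'] (if a n \<in> H then 1 else 0)" for n
    unfolding At_def inst.simps list.map a_def
    by (rule comp1[OF comp3[OF proj proj proj eval_POW[OF xc wc(1)]] s1]) auto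
  have hAv: "eval (inst s At) [n, x, w, w'] (a n)" for n
    unfolding At_def inst.simps list.map a_def
    by (rule comp3[OF proj proj proj eval_POW[OF xc wc(1)]]) auto
  have hB: "eval (Comp (inst s (THole 1)) [inst s Bt]) [n, x, w, w'] (if b n \<in> H then 1 else 0)" for n
    unfolding Bt_def inst.simps list.map b_def
    by (rule comp1[OF comp3[OF proj proj proj eval_POW[OF xc wc(2)]] s1]) auto
  have hBv: "eval (inst s Bt) [n, x, w, w'] (b n)" for n
    unfolding Bt_def inst.simps list.map b_def
    by (rule comp3[OF proj proj proj eval_POW[OF xc wc(2)]]) auto
  have hS: "eval (inst s St) [n, x, w, w'] (if Q n then 0 else 1)" for n
  proof -
    have "eval (inst s St) [n, x, w, w']
       (if (if a n \<in> H then 1 else 0) = (0::nat) then (if (if b n \<in> H then 1 else 0) = (0::nat) then 1 else 0) else 0)"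
      unfolding St_def inst.simps(4) list.map CONDt_def NOTt_def inst_emb
      by (rule comp3[OF hA _ comp1[OF hB eval_NOT] eval_COND]) (simp add: eval_Zero)
    moreover have "(if (if a n \<in> H then 1 else 0) = (0::nat) then (if (if b n \<in> H then 1 else 0) = (0::nat) then 1 else 0) else 0) = (if Q n then 0 else (1::nat))"
      unfolding Q_def by simp
    ultimately show ?thesis by simp
  qed
  have exQ: "\<exists>n. Q n" using ex unfolding Q_def a_def b_def w_def w'_def by blast
  define n0 where "n0 = (LEAST n. Q n)"
  have Qn0: "Q n0" unfolding n0_def using exQ by (rule LeastI_ex)
  have mn: "eval (inst s (TMn St)) [x, w, w'] n0"
    unfolding inst.simps(6)
  proof (rule eval_Mn_val[OF hS])
    show "(if Q n0 then 0 else 1) = (0::nat)" using Qn0 by simp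
    fix m assume "m < n0"
    then have "\<not> Q m" unfolding n0_def by (rule not_less_Least)
    then show "0 < (if Q m then 0 else 1::nat)" by simp
  qed
  define y where "y = (if a n0 \<in> H then a n0 else b n0)"
  have out: "eval (inst s OUTt) [n0, x, w, w'] y"
  proof -
    have "eval (inst s OUTt) [n0, x, w, w'] (if (if a n0 \<in> H then 1 else 0) = (0::nat) then b n0 else a n0)"
      unfolding OUTt_def inst.simps(4) list.map CONDt_def inst_emb
      by (rule comp3[OF hA hAv hBv eval_COND])
    moreover have "(if (if a n0 \<in> H then 1 else 0) = (0::nat) then b n0 else a n0) = y"
      unfolding y_def by simp
    ultimately show ?thesis by simp
  qed
  have m2: "eval (inst s MAIN2t) [x, w, w'] y"
    unfolding MAIN2t_def inst.simps(3,4) list.map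
    by (rule comp4[OF mn proj proj proj out]) auto
  have m1: "eval (inst s MAINt) [x, u, v] y"
    unfolding MAINt_def inst.simps(3,4) list.map
    by (rule comp3[OF proj eval_W eval_W' m2[unfolded w_def w'_def]]) auto
  have "eval (inst s Tt) [x] y"
    unfolding Tt_def inst.simps(3,4,7) list.map s2 s3
    by (rule comp3[OF proj eval_K eval_K m1]) auto
  moreover have "y \<in> H" using Qn0 unfolding y_def Q_def by auto
  moreover have "y = a n0 \<or> y = b n0" unfolding y_def by simp
  ultimately show ?thesis unfolding a_def b_def w_def w'_def by blast
qed

end

lemma (in comm_group) w_pow:
  assumes "u \<in> carrier G" "v \<in> carrier G"
  shows "(u \<otimes> inv v) [^] (j::int) = u [^] j \<otimes> v [^] (-j)"
  using assms by (simp add: int_pow_distrib int_pow_inv int_pow_neg)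

lemma (in comm_group) key_unique:
  assumes G: "subgroup G' G" and H: "subgroup H G"
    and u: "u \<in> G'" and v: "v \<in> H"
    and span: "\<forall>x\<in>G'. \<exists>k::int. \<exists>d\<in>G' \<inter> H. x = u [^] k \<otimes> d"
    and indep: "\<forall>k::int. u [^] k \<in> H \<longrightarrow> u [^] k = \<one>"
    and ord: "\<forall>k::int. u [^] k = \<one> \<longleftrightarrow> v [^] k = \<one>"
    and x: "x \<in> G'"
  shows "\<exists>!y. y \<in> H \<and> (\<exists>m::int. y = x \<otimes> (u \<otimes> inv v) [^] m)"
proof -
  have uc: "u \<in> carrier G" using G u subgroup.subset by blast
  have vc: "v \<in> carrier G" using H v subgroup.subset by blast
  have xc: "x \<in> carrier G" using G x subgroup.subset by blast
  obtain k :: int and d where d: "d \<in> G' \<inter> H" and xk: "x = u [^] k \<otimes> d" using span x by blast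
  have dc: "d \<in> carrier G" using d H subgroup.subset by blast
  have ex: "x \<otimes> (u \<otimes> inv v) [^] (-k) \<in> H \<and> (\<exists>m::int. x \<otimes> (u \<otimes> inv v) [^] (-k) = x \<otimes> (u \<otimes> inv v) [^] m)"
  proof -
    have "x \<otimes> (u \<otimes> inv v) [^] (-k) = u [^] k \<otimes> d \<otimes> (u [^] (-k) \<otimes> v [^] k)"
      using w_pow[OF uc vc, of "-k"] xk by simp
    also have "\<dots> = v [^] k \<otimes> d \<otimes> (u [^] k \<otimes> u [^] (-k))"
      using uc vc dc by (simp add: m_ac)
    also have "u [^] k \<otimes> u [^] (-k) = \<one>" using uc by (simp add: int_pow_neg)
    finally have "x \<otimes> (u \<otimes> inv v) [^] (-k) = v [^] k \<otimes> d" using vc dc by simp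
    moreover have "v [^] k \<otimes> d \<in> H" using H v d by (simp add: subgroup.m_closed subgroup_int_pow_closed)
    ultimately show ?thesis by metis
  qed
  show ?thesis
  proof (rule ex1I[of _ "x \<otimes> (u \<otimes> inv v) [^] (-k)"])
    show "x \<otimes> (u \<otimes> inv v) [^] (-k) \<in> H \<and> (\<exists>m::int. x \<otimes> (u \<otimes> inv v) [^] (-k) = x \<otimes> (u \<otimes> inv v) [^] m)"
      using ex .
  next
    fix y assume "y \<in> H \<and> (\<exists>m::int. y = x \<otimes> (u \<otimes> inv v) [^] m)"
    then obtain m :: int where yH: "y \<in> H" and ym: "y = x \<otimes> (u \<otimes> inv v) [^] m" by blast
    define y0 where "y0 = x \<otimes> (u \<otimes> inv v) [^] (-k)"
    have y0H: "y0 \<in> H" using ex y0_def by simp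
    define j where "j = m + k"
    have wc: "u \<otimes> inv v \<in> carrier G" using uc vc by simp
    have yy: "y = y0 \<otimes> (u \<otimes> inv v) [^] j"
      unfolding ym y0_def j_def using wc xc by (simp add: int_pow_mult m_assoc flip: int_pow_mult) 
    have "(u \<otimes> inv v) [^] j = inv y0 \<otimes> y"
      using yy y0H H wc xc by (metis inv_solve_left int_pow_closed subgroup.mem_carrier m_closed)
    then have wH: "(u \<otimes> inv v) [^] j \<in> H"
      using y0H yH H by (simp add: subgroup.m_closed subgroup.m_inv_closed)
    have "u [^] j = (u \<otimes> inv v) [^] j \<otimes> v [^] j"
      using w_pow[OF uc vc, of j] uc vc by (simp add: m_assoc int_pow_neg)
    then have "u [^] j \<in> H" using wH H v by (simp add: subgroup.m_closed subgroup_int_pow_closed)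
    then have "u [^] j = \<one>" using indep by blast
    then have "v [^] j = \<one>" using ord by blast
    then have "(u \<otimes> inv v) [^] j = \<one>" using w_pow[OF uc vc, of j] \<open>u [^] j = \<one>\<close> vc
      by (simp add: int_pow_neg)
    then show "y = x \<otimes> (u \<otimes> inv v) [^] (-k)" using yy y0_def y0H H
      by (simp add: subgroup.mem_carrier)
  qed
qed

lemma ex1_two: "\<exists>!y. P y \<Longrightarrow> P a \<Longrightarrow> P b \<Longrightarrow> a = b" by blast

lemma (in group) shift_back:
  assumes "W \<in> carrier G" "a \<in> carrier G"
  shows "(a \<otimes> W [^] (-m::int)) \<otimes> W [^] m = a"
proof -
  have "(a \<otimes> W [^] (-m::int)) \<otimes> W [^] m = a \<otimes> (W [^] (-m) \<otimes> W [^] m)"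
    using assms by (simp add: m_assoc)
  also have "W [^] (-m) \<otimes> W [^] m = \<one>" using int_pow_mult[OF assms(1), of "-m" m] by simp
  finally show ?thesis using assms by simp
qed

lemma (in comm_group) vu_pow:
  assumes "u \<in> carrier G" "v \<in> carrier G"
  shows "(v \<otimes> inv u) [^] (m::int) = (u \<otimes> inv v) [^] (-m)"
proof -
  have "v \<otimes> inv u = inv (u \<otimes> inv v)" using assms by (simp add: inv_mult_group m_comm)
  then show ?thesis using assms by (simp add: int_pow_inv int_pow_neg)
qed

lemma (in comm_group) iso_GH:
  assumes G: "subgroup G' G" and H: "subgroup H G"
    and u: "u \<in> G'" and v: "v \<in> H"
    and spanG: "\<forall>x\<in>G'. \<exists>k::int. \<exists>d\<in>G' \<inter> H. x = u [^] k \<otimes> d"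
    and indepU: "\<forall>k::int. u [^] k \<in> H \<longrightarrow> u [^] k = \<one>"
    and spanH: "\<forall>x\<in>H. \<exists>k::int. \<exists>d\<in>H \<inter> G'. x = v [^] k \<otimes> d"
    and indepV: "\<forall>k::int. v [^] k \<in> G' \<longrightarrow> v [^] k = \<one>"
    and ord: "\<forall>k::int. u [^] k = \<one> \<longleftrightarrow> v [^] k = \<one>"
  shows "(\<lambda>x. THE y. y \<in> H \<and> (\<exists>m::int. y = x \<otimes> (u \<otimes> inv v) [^] m))
     \<in> iso (subgroup_generated G G') (subgroup_generated G H)"
proof -
  define f where "f = (\<lambda>x. THE y. y \<in> H \<and> (\<exists>m::int. y = x \<otimes> (u \<otimes> inv v) [^] m))"
  define w where "w = u \<otimes> inv v"
  have uc: "u \<in> carrier G" using G u subgroup.subset by blast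
  have vc: "v \<in> carrier G" using H v subgroup.subset by blast
  have wc: "w \<in> carrier G" using uc vc w_def by simp
  have Gc: "x \<in> G' \<Longrightarrow> x \<in> carrier G" for x using G subgroup.subset by blast
  have Hc: "x \<in> H \<Longrightarrow> x \<in> carrier G" for x using H subgroup.subset by blast
  have U: "\<exists>!y. y \<in> H \<and> (\<exists>m::int. y = x \<otimes> w [^] m)" if "x \<in> G'" for x
    using key_unique[OF G H u v spanG indepU ord that] w_def by simp
  have ord': "\<forall>k::int. v [^] k = \<one> \<longleftrightarrow> u [^] k = \<one>" using ord by blast
  have U': "\<exists>!x. x \<in> G' \<and> (\<exists>m::int. x = y \<otimes> w [^] m)" if "y \<in> H" for y
  proof -
    have "\<exists>!x. x \<in> G' \<and> (\<exists>m::int. x = y \<otimes> (v \<otimes> inv u) [^] m)"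
      using key_unique[OF H G v u spanH indepV ord' that] .
    moreover have "(\<exists>m::int. x = y \<otimes> (v \<otimes> inv u) [^] m) \<longleftrightarrow> (\<exists>m::int. x = y \<otimes> w [^] m)" for x
    proof
      assume "\<exists>m::int. x = y \<otimes> (v \<otimes> inv u) [^] m"
      then obtain m :: int where "x = y \<otimes> (v \<otimes> inv u) [^] m" by blast
      then have "x = y \<otimes> w [^] (-m)" using vu_pow[OF uc vc] w_def by simp
      then show "\<exists>m::int. x = y \<otimes> w [^] m" by blast
    next
      assume "\<exists>m::int. x = y \<otimes> w [^] m"
      then obtain m :: int where "x = y \<otimes> w [^] m" by blast
      then have "x = y \<otimes> (v \<otimes> inv u) [^] (-m)" using vu_pow[OF uc vc, of "-m"] w_def by simp
      then show "\<exists>m::int. x = y \<otimes> (v \<otimes> inv u) [^] m" by blast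
    qed
    ultimately show ?thesis by simp
  qed
  have fP: "f x \<in> H \<and> (\<exists>m::int. f x = x \<otimes> w [^] m)" if "x \<in> G'" for x
    unfolding f_def w_def[symmetric] using theI'[OF U[OF that]] .
  have fU: "f x = y" if "x \<in> G'" "y \<in> H" "y = x \<otimes> w [^] m" for x y and m :: int
  proof -
    have "y \<in> H \<and> (\<exists>m::int. y = x \<otimes> w [^] m)" using that(2,3) by blast
    then show ?thesis using ex1_two[OF U[OF that(1)] fP[OF that(1)]] by simp
  qed
  have bk: "x = f x \<otimes> w [^] (-m)" if "f x = x \<otimes> w [^] m" "x \<in> G'" for x and m :: int
  proof -
    have "f x \<otimes> w [^] (-m) = x \<otimes> (w [^] m \<otimes> w [^] (-m))"
      using that wc Gc[OF that(2)] by (simp add: m_assoc)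
    also have "w [^] m \<otimes> w [^] (-m) = \<one>" using int_pow_mult[OF wc, of m "-m"] by simp
    finally show ?thesis using that wc Gc by simp
  qed
  have cG: "carrier (subgroup_generated G G') = G'" using subgroup.carrier_subgroup_generated_subgroup[OF G] by simp
  have cH: "carrier (subgroup_generated G H) = H" using subgroup.carrier_subgroup_generated_subgroup[OF H] by simp
  have hom: "f \<in> hom (subgroup_generated G G') (subgroup_generated G H)"
  proof (rule homI)
    fix x assume "x \<in> carrier (subgroup_generated G G')"
    then show "f x \<in> carrier (subgroup_generated G H)" using fP cG cH by auto
  next
    fix x y assume "x \<in> carrier (subgroup_generated G G')" "y \<in> carrier (subgroup_generated G G')"
    then have x: "x \<in> G'" and y: "y \<in> G'" using cG by auto
    obtain m1 :: int where m1: "f x = x \<otimes> w [^] m1" using fP[OF x] by blast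
    obtain m2 :: int where m2: "f y = y \<otimes> w [^] m2" using fP[OF y] by blast
    have xy: "x \<otimes> y \<in> G'" using x y G by (simp add: subgroup.m_closed)
    have "f x \<otimes> f y \<in> H" using fP[OF x] fP[OF y] H by (simp add: subgroup.m_closed)
    moreover have "f x \<otimes> f y = (x \<otimes> y) \<otimes> w [^] (m1 + m2)"
      unfolding m1 m2 using Gc[OF x] Gc[OF y] wc by (simp add: int_pow_mult m_ac)
    ultimately have "f (x \<otimes> y) = f x \<otimes> f y" using fU[OF xy] by simp
    then show "f (x \<otimes>\<^bsub>subgroup_generated G G'\<^esub> y) = f x \<otimes>\<^bsub>subgroup_generated G H\<^esub> f y"
      by (simp add: subgroup_generated_def)
  qed
  have inj: "inj_on f G'"
  proof (rule inj_onI)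
    fix x y assume x: "x \<in> G'" and y: "y \<in> G'" and e: "f x = f y"
    obtain m1 :: int where m1: "f x = x \<otimes> w [^] m1" using fP[OF x] by blast
    obtain m2 :: int where m2: "f y = y \<otimes> w [^] m2" using fP[OF y] by blast
    have "x = f x \<otimes> w [^] (-m1)" using bk[OF m1 x] .
    moreover have "y = f x \<otimes> w [^] (-m2)" using bk[OF m2 y] e by simp
    ultimately show "x = y" using ex1_two[OF U'[of "f x"], of x y] fP[OF x] x y by blast
  qed
  have surj: "f ` G' = H"
  proof
    show "f ` G' \<subseteq> H" using fP by auto
  next
    show "H \<subseteq> f ` G'"
    proof
      fix y assume y: "y \<in> H"
      then obtain x m where x: "x \<in> G'" and xm: "x = y \<otimes> w [^] (m::int)" using U' by (meson ex1E)
      have "y = x \<otimes> w [^] (-m)" using xm shift_back[OF wc Hc[OF y], of "-m"] by simp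
      then have "f x = y" using fU[OF x y] by blast
      then show "y \<in> f ` G'" using x by blast
    qed
  qed
  show ?thesis unfolding f_def[symmetric]
    using hom inj surj cG cH by (simp add: iso_def bij_betw_def)
qed

context comm_group
begin

lemma exponent_kill:
  assumes SB: "\<forall>x\<in>carrier G. \<exists>(i::int) (j::int). x = b [^] i \<otimes> v [^] j"
    and b: "b \<in> carrier G" and v: "v \<in> carrier G"
    and bn: "b [^] (n::int) = \<one>" and vr: "v [^] (r::int) = \<one>"
    and x: "x \<in> carrier G"
  shows "x [^] (n * r) = \<one>"
proof -
  obtain i j :: int where xij: "x = b [^] i \<otimes> v [^] j" using SB x by blast
  have "x [^] (n * r) = (b [^] i) [^] (n * r) \<otimes> (v [^] j) [^] (n * r)"
    using xij b v by (simp add: int_pow_distrib)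
  also have "(b [^] i) [^] (n * r) = (b [^] n) [^] (i * r)"
    using b by (simp add: int_pow_pow mult_ac)
  also have "(v [^] j) [^] (n * r) = (v [^] r) [^] (j * n)"
    using v by (simp add: int_pow_pow mult_ac)
  finally show ?thesis using bn vr by simp
qed

lemma L1:
  assumes SB: "\<forall>x\<in>carrier G. \<exists>(i::int) (j::int). x = b [^] i \<otimes> v [^] j"
    and b: "b \<in> carrier G" and v: "v \<in> carrier G" and u: "u \<in> carrier G"
    and ob: "ord b \<noteq> 0" and ov: "ord v \<noteq> 0"
  shows "ord u \<noteq> 0"
proof
  assume ou: "ord u = 0"
  have "u [^] (int (ord b) * int (ord v)) = \<one>"
    by (rule exponent_kill[OF SB b v _ _ u]) (use b v in \<open>simp_all add: int_pow_int\<close>)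
  then have "int (ord u) dvd int (ord b) * int (ord v)" using int_pow_eq_id[OF u] by blast
  then show False using ou ob ov by simp
qed

lemma L3:
  assumes SB: "\<forall>x\<in>carrier G. \<exists>(i::int) (j::int). x = b [^] i \<otimes> v [^] j"
    and IB: "\<forall>(i::int) (j::int). b [^] i \<otimes> v [^] j = \<one> \<longrightarrow> b [^] i = \<one> \<and> v [^] j = \<one>"
    and b: "b \<in> carrier G" and v: "v \<in> carrier G" and x: "x \<in> carrier G"
    and ob: "ord b = 0" and ox: "ord x \<noteq> 0"
  shows "\<exists>j::int. x = v [^] j"
proof -
  obtain i j :: int where xij: "x = b [^] i \<otimes> v [^] j" using SB x by blast
  define k where "k = int (ord x)"
  have "x [^] k = \<one>" using x k_def by (simp add: int_pow_int)
  then have "b [^] (i * k) \<otimes> v [^] (j * k) = \<one>"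
    using xij b v by (simp add: int_pow_distrib int_pow_pow)
  then have "b [^] (i * k) = \<one>" using IB by blast
  then have "i * k = 0" using int_pow_eq_id[OF b] ob by simp
  then have "i = 0" using ox k_def by simp
  then show ?thesis using xij v by auto
qed

lemma powpow_one:
  assumes "v \<in> carrier G" "v [^] (k::int) = \<one>"
  shows "v [^] (j * k) = \<one>"
  using assms by (metis int_pow_one int_pow_pow mult.commute)

lemma L4:
  assumes SA: "\<forall>x\<in>carrier G. \<exists>(i::int) (j::int). x = a [^] i \<otimes> u [^] j"
    and IA: "\<forall>(i::int) (j::int). a [^] i \<otimes> u [^] j = \<one> \<longrightarrow> a [^] i = \<one> \<and> u [^] j = \<one>"
    and SB: "\<forall>x\<in>carrier G. \<exists>(i::int) (j::int). x = b [^] i \<otimes> v [^] j"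
    and IB: "\<forall>(i::int) (j::int). b [^] i \<otimes> v [^] j = \<one> \<longrightarrow> b [^] i = \<one> \<and> v [^] j = \<one>"
    and c: "a \<in> carrier G" "u \<in> carrier G" "b \<in> carrier G" "v \<in> carrier G"
    and oa: "ord a = 0" and ob: "ord b = 0" and ou: "ord u \<noteq> 0" and ov: "ord v \<noteq> 0"
  shows "ord u dvd ord v"
proof -
  obtain j :: int where uj: "u = v [^] j" using L3[OF SB IB c(3,4,2) ob ou] by blast
  have "v [^] int (ord v) = \<one>" using c by (simp add: int_pow_int)
  then have "u [^] int (ord v) = \<one>" using uj c by (simp add: int_pow_pow powpow_one)
  then show ?thesis using int_pow_eq_id[OF c(2)] by simp
qed

lemma L5:
  assumes SA: "\<forall>x\<in>carrier G. \<exists>(i::int) (j::int). x = a [^] i \<otimes> u [^] j"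
    and IA: "\<forall>(i::int) (j::int). a [^] i \<otimes> u [^] j = \<one> \<longrightarrow> a [^] i = \<one> \<and> u [^] j = \<one>"
    and SB: "\<forall>x\<in>carrier G. \<exists>(i::int) (j::int). x = b [^] i \<otimes> v [^] j"
    and IB: "\<forall>(i::int) (j::int). b [^] i \<otimes> v [^] j = \<one> \<longrightarrow> b [^] i = \<one> \<and> v [^] j = \<one>"
    and c: "a \<in> carrier G" "u \<in> carrier G" "b \<in> carrier G" "v \<in> carrier G"
    and oa: "ord a = 0" and ob: "ord b = 0" and ou: "ord u \<noteq> 0"
  shows "ord v \<noteq> 0"
proof
  assume ov: "ord v = 0"
  obtain j :: int where uj: "u = v [^] j" using L3[OF SB IB c(3,4,2) ob ou] by blast
  have "u [^] int (ord u) = \<one>" using c by (simp add: int_pow_int)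
  then have "v [^] (j * int (ord u)) = \<one>" using uj c by (simp add: int_pow_pow)
  then have "j * int (ord u) = 0" using int_pow_eq_id[OF c(4)] ov by simp
  then have "j = 0" using ou by simp
  then have u1: "u = \<one>" using uj by simp
  have SA': "\<forall>x\<in>carrier G. \<exists>i::int. x = a [^] i"
  proof
    fix x assume "x \<in> carrier G"
    then obtain i j :: int where "x = a [^] i \<otimes> u [^] j" using SA by blast
    then show "\<exists>i::int. x = a [^] i" using u1 c by auto
  qed
  obtain i1 j1 :: int where a1: "a = b [^] i1 \<otimes> v [^] j1" using SB c by blast
  obtain i2 :: int where b2: "b = a [^] i2" using SA' c by blast
  obtain i3 :: int where v3: "v = a [^] i3" using SA' c by blast
  have "v = b [^] (i1 * i3) \<otimes> v [^] (j1 * i3)"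
    using v3 a1 c by (simp add: int_pow_distrib int_pow_pow)
  then have "b [^] (i1 * i3) \<otimes> v [^] (j1 * i3) \<otimes> inv v = \<one>" using c by simp
  then have "b [^] (i1 * i3) \<otimes> v [^] (j1 * i3 - 1) = \<one>" using c by (simp add: int_pow_diff m_assoc)
  then have "b [^] (i1 * i3) = \<one> \<and> v [^] (j1 * i3 - 1) = \<one>" using IB by blast
  then have "i1 * i3 = 0" and "j1 * i3 - 1 = 0"
    using int_pow_eq_id[OF c(3)] int_pow_eq_id[OF c(4)] ob ov by auto
  then have "i1 = 0" by auto
  then have "a = v [^] j1" using a1 c by simp
  then have "b = v [^] (j1 * i2)" using b2 c by (simp add: int_pow_pow)
  then have "b [^] (1::int) \<otimes> v [^] (- (j1 * i2)) = \<one>" using c by (simp add: int_pow_neg)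
  then have "b [^] (1::int) = \<one>" using IB by blast
  then show False using int_pow_eq_id[OF c(3)] ob by simp
qed

lemma int_dvd_small: "int n dvd int i - int i' \<Longrightarrow> i < n \<Longrightarrow> i' < n \<Longrightarrow> i = i'"
  by (smt (verit, ccfv_SIG) dvd_minus_iff of_nat_0_le_iff of_nat_eq_iff of_nat_less_iff zdvd_not_zless)

lemma pow_mod_ord:
  assumes a: "a \<in> carrier G" and oa: "ord a \<noteq> 0"
  shows "a [^] (i::int) = a [^] (nat (i mod int (ord a))) \<and> nat (i mod int (ord a)) < ord a"
proof
  have nn: "i mod int (ord a) \<ge> 0" using oa by simp
  have "a [^] (nat (i mod int (ord a))) = a [^] (i mod int (ord a))"
  proof -
    have "int (nat (i mod int (ord a))) = i mod int (ord a)" using nn by simp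
    then show ?thesis by (simp only: int_pow_int[symmetric])
  qed
  also have "\<dots> = a [^] i"
  proof -
    have "int (ord a) dvd i - i mod int (ord a)" by (simp add: minus_mod_eq_mult_div)
    then show ?thesis using int_pow_eq[OF a] by blast
  qed
  finally show "a [^] i = a [^] (nat (i mod int (ord a)))" by simp
  show "nat (i mod int (ord a)) < ord a" using oa nn by (simp add: nat_less_iff)
qed

lemma L2:
  assumes SA: "\<forall>x\<in>carrier G. \<exists>(i::int) (j::int). x = a [^] i \<otimes> u [^] j"
    and IA: "\<forall>(i::int) (j::int). a [^] i \<otimes> u [^] j = \<one> \<longrightarrow> a [^] i = \<one> \<and> u [^] j = \<one>"
    and a: "a \<in> carrier G" and u: "u \<in> carrier G"
    and oa: "ord a \<noteq> 0" and ou: "ord u \<noteq> 0"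
  shows "finite (carrier G) \<and> card (carrier G) = ord a * ord u"
proof -
  define phi where "phi = (\<lambda>(i::nat, j::nat). a [^] i \<otimes> u [^] j)"
  have bij: "bij_betw phi ({..<ord a} \<times> {..<ord u}) (carrier G)"
    unfolding bij_betw_def
  proof
    show "inj_on phi ({..<ord a} \<times> {..<ord u})"
    proof (rule inj_onI)
      fix p q assume p: "p \<in> {..<ord a} \<times> {..<ord u}" and q: "q \<in> {..<ord a} \<times> {..<ord u}"
        and e0: "phi p = phi q"
      obtain i j where pij: "p = (i, j)" by force
      obtain i' j' where qij: "q = (i', j')" by force
      have i: "i \<in> {..<ord a}" and j: "j \<in> {..<ord u}" using p pij by auto
      have i': "i' \<in> {..<ord a}" and j': "j' \<in> {..<ord u}" using q qij by auto
      have e: "phi (i, j) = phi (i', j')" using e0 pij qij by simp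
      have "a [^] (int i - int i') \<otimes> u [^] (int j - int j') = (a [^] i \<otimes> u [^] j) \<otimes> inv (a [^] i' \<otimes> u [^] j')"
        using a u by (simp add: int_pow_diff int_pow_int inv_mult_group m_ac)
      also have "\<dots> = \<one>" using e a u unfolding phi_def by simp
      finally have "a [^] (int i - int i') = \<one> \<and> u [^] (int j - int j') = \<one>" using IA by blast
      then have "int (ord a) dvd int i - int i'" "int (ord u) dvd int j - int j'"
        using int_pow_eq_id[OF a] int_pow_eq_id[OF u] by auto
      then show "p = q" using i j i' j' int_dvd_small pij qij by auto
    qed
  next
    show "phi ` ({..<ord a} \<times> {..<ord u}) = carrier G"
    proof
      show "phi ` ({..<ord a} \<times> {..<ord u}) \<subseteq> carrier G" using a u unfolding phi_def by auto
    next
      show "carrier G \<subseteq> phi ` ({..<ord a} \<times> {..<ord u})"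
      proof
        fix x assume "x \<in> carrier G"
        then obtain i j :: int where x: "x = a [^] i \<otimes> u [^] j" using SA by blast
        have x': "x = phi (nat (i mod int (ord a)), nat (j mod int (ord u)))"
          using x pow_mod_ord[OF a oa, of i] pow_mod_ord[OF u ou, of j] unfolding phi_def by simp
        show "x \<in> phi ` ({..<ord a} \<times> {..<ord u})"
          using x' pow_mod_ord[OF a oa, of i] pow_mod_ord[OF u ou, of j] by blast
      qed
    qed
  qed
  then have "finite (carrier G)" using bij_betw_finite by blast
  moreover have "card (carrier G) = ord a * ord u"
    using bij_betw_same_card[OF bij] by (simp add: card_cartesian_product)
  ultimately show ?thesis by simp
qed

lemma cancel_Q:
  assumes SA: "\<forall>x\<in>carrier G. \<exists>(i::int) (j::int). x = a [^] i \<otimes> u [^] j"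
    and IA: "\<forall>(i::int) (j::int). a [^] i \<otimes> u [^] j = \<one> \<longrightarrow> a [^] i = \<one> \<and> u [^] j = \<one>"
    and SB: "\<forall>x\<in>carrier G. \<exists>(i::int) (j::int). x = b [^] i \<otimes> v [^] j"
    and IB: "\<forall>(i::int) (j::int). b [^] i \<otimes> v [^] j = \<one> \<longrightarrow> b [^] i = \<one> \<and> v [^] j = \<one>"
    and c: "a \<in> carrier G" "u \<in> carrier G" "b \<in> carrier G" "v \<in> carrier G"
    and oab: "ord a = ord b"
  shows "ord u = ord v"
proof (cases "ord a = 0")
  case True
  then have ob: "ord b = 0" using oab by simp
  show ?thesis
  proof (cases "ord u = 0")
    case True
    then have "ord v = 0" using L5[OF SB IB SA IA c(3,4,1,2) ob \<open>ord a = 0\<close>] by blast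
    then show ?thesis using True by simp
  next
    case False
    then have ov: "ord v \<noteq> 0" using L5[OF SA IA SB IB c \<open>ord a = 0\<close> ob] by blast
    show ?thesis using L4[OF SA IA SB IB c \<open>ord a = 0\<close> ob False ov]
      L4[OF SB IB SA IA c(3,4,1,2) ob \<open>ord a = 0\<close> ov False] by (rule dvd_antisym)
  qed
next
  case False
  then have ob: "ord b \<noteq> 0" using oab by simp
  have uv: "ord u \<noteq> 0 \<longleftrightarrow> ord v \<noteq> 0"
    using L1[OF SB c(3,4,2) ob] L1[OF SA c(1,2,4) False] by blast
  show ?thesis
  proof (cases "ord u = 0")
    case True then show ?thesis using uv by simp
  next
    case ou: False
    then have ov: "ord v \<noteq> 0" using uv by simp
    have "card (carrier G) = ord a * ord u" using L2[OF SA IA c(1,2) False ou] by simp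
    moreover have "card (carrier G) = ord b * ord v" using L2[OF SB IB c(3,4) ob ov] by simp
    ultimately show ?thesis using oab False by simp
  qed
qed

end

lemma (in group) ord_eq_int:
  assumes "x \<in> carrier G" "y \<in> carrier G" "\<forall>k::int. x [^] k = \<one> \<longleftrightarrow> y [^] k = \<one>"
  shows "ord x = ord y"
proof -
  have e: "int (ord x) dvd k \<longleftrightarrow> int (ord y) dvd k" for k
    using assms int_pow_eq_id by blast
  have "ord x dvd ord y" using e[of "int (ord y)"] by simp
  moreover have "ord y dvd ord x" using e[of "int (ord x)"] by simp
  ultimately show ?thesis by (simp add: dvd_antisym)
qed

lemma (in comm_group) cancel_E:
  assumes D: "subgroup D G"
    and c: "a \<in> carrier G" "u \<in> carrier G" "b \<in> carrier G" "v \<in> carrier G"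
    and IAE: "\<forall>(i::int) (j::int). a [^] i \<otimes> u [^] j \<in> D \<longrightarrow> a [^] i = \<one> \<and> u [^] j = \<one>"
    and SAE: "\<forall>x\<in>carrier G. \<exists>(i::int) (j::int). \<exists>d\<in>D. x = a [^] i \<otimes> u [^] j \<otimes> d"
    and IBE: "\<forall>(i::int) (j::int). b [^] i \<otimes> v [^] j \<in> D \<longrightarrow> b [^] i = \<one> \<and> v [^] j = \<one>"
    and SBE: "\<forall>x\<in>carrier G. \<exists>(i::int) (j::int). \<exists>d\<in>D. x = b [^] i \<otimes> v [^] j \<otimes> d"
    and oab: "\<forall>k::int. a [^] k = \<one> \<longleftrightarrow> b [^] k = \<one>"
  shows "\<forall>k::int. u [^] k = \<one> \<longleftrightarrow> v [^] k = \<one>"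
proof -
  interpret N: normal D G using subgroup_imp_normal[OF D] .
  interpret Q: comm_group "G Mod D" using abelian_FactGroup[OF D] .
  define p where "p = (\<lambda>x. D #> x)"
  have hom: "p \<in> hom G (G Mod D)" unfolding p_def by (rule N.r_coset_hom_Mod)
  interpret h: group_hom G "G Mod D" p
    using hom by (simp add: group_hom_def group_hom_axioms_def is_group Q.is_group)
  have pc: "x \<in> carrier G \<Longrightarrow> p x \<in> carrier (G Mod D)" for x using hom by (simp add: hom_def Pi_def)
  have ppow: "x \<in> carrier G \<Longrightarrow> p (x [^] (k::int)) = p x [^]\<^bsub>G Mod D\<^esub> k" for x k
    by (rule h.hom_int_pow)
  have pmul: "x \<in> carrier G \<Longrightarrow> y \<in> carrier G \<Longrightarrow> p (x \<otimes> y) = p x \<otimes>\<^bsub>G Mod D\<^esub> p y" for x y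
    by simp
  have pone: "x \<in> carrier G \<Longrightarrow> p x = \<one>\<^bsub>G Mod D\<^esub> \<longleftrightarrow> x \<in> D" for x
    unfolding p_def one_FactGroup
    using coset_join1[OF _ _ D] subgroup.rcos_const[OF D is_group] by blast
  have one_in: "\<one> \<in> D" using D subgroup.one_closed by blast
  have tr: "p x [^]\<^bsub>G Mod D\<^esub> (k::int) = \<one>\<^bsub>G Mod D\<^esub> \<longleftrightarrow> x [^] k = \<one>"
    if x: "x \<in> carrier G" and h: "\<forall>k::int. x [^] k \<in> D \<longrightarrow> x [^] k = \<one>" for x k
    using pone[of "x [^] k"] ppow[OF x, of k] h one_in x by auto
  have ha: "\<forall>k::int. a [^] k \<in> D \<longrightarrow> a [^] k = \<one>"
    using IAE c by (metis int_pow_0 int_pow_closed r_one)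
  have hu: "\<forall>k::int. u [^] k \<in> D \<longrightarrow> u [^] k = \<one>"
    using IAE c by (metis int_pow_0 int_pow_closed l_one)
  have hb: "\<forall>k::int. b [^] k \<in> D \<longrightarrow> b [^] k = \<one>"
    using IBE c by (metis int_pow_0 int_pow_closed r_one)
  have hv: "\<forall>k::int. v [^] k \<in> D \<longrightarrow> v [^] k = \<one>"
    using IBE c by (metis int_pow_0 int_pow_closed l_one)
  have IQ: "\<forall>(i::int) (j::int). p x [^]\<^bsub>G Mod D\<^esub> i \<otimes>\<^bsub>G Mod D\<^esub> p y [^]\<^bsub>G Mod D\<^esub> j = \<one>\<^bsub>G Mod D\<^esub>
      \<longrightarrow> p x [^]\<^bsub>G Mod D\<^esub> i = \<one>\<^bsub>G Mod D\<^esub> \<and> p y [^]\<^bsub>G Mod D\<^esub> j = \<one>\<^bsub>G Mod D\<^esub>"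
    if x: "x \<in> carrier G" and y: "y \<in> carrier G"
      and I: "\<forall>(i::int) (j::int). x [^] i \<otimes> y [^] j \<in> D \<longrightarrow> x [^] i = \<one> \<and> y [^] j = \<one>"
      and hx: "\<forall>k::int. x [^] k \<in> D \<longrightarrow> x [^] k = \<one>" and hy: "\<forall>k::int. y [^] k \<in> D \<longrightarrow> y [^] k = \<one>"
    for x y
  proof (intro allI impI)
    fix i j :: int
    assume "p x [^]\<^bsub>G Mod D\<^esub> i \<otimes>\<^bsub>G Mod D\<^esub> p y [^]\<^bsub>G Mod D\<^esub> j = \<one>\<^bsub>G Mod D\<^esub>"
    then have "p (x [^] i \<otimes> y [^] j) = \<one>\<^bsub>G Mod D\<^esub>" using x y ppow pmul by simp
    then have "x [^] i \<otimes> y [^] j \<in> D" using pone[of "x [^] i \<otimes> y [^] j"] x y by simp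
    then have "x [^] i = \<one> \<and> y [^] j = \<one>" using I by blast
    then show "p x [^]\<^bsub>G Mod D\<^esub> i = \<one>\<^bsub>G Mod D\<^esub> \<and> p y [^]\<^bsub>G Mod D\<^esub> j = \<one>\<^bsub>G Mod D\<^esub>"
      using tr[OF x hx] tr[OF y hy] by simp
  qed
  have SQ: "\<forall>XX\<in>carrier (G Mod D). \<exists>(i::int) (j::int). XX = p x [^]\<^bsub>G Mod D\<^esub> i \<otimes>\<^bsub>G Mod D\<^esub> p y [^]\<^bsub>G Mod D\<^esub> j"
    if x: "x \<in> carrier G" and y: "y \<in> carrier G"
      and S: "\<forall>z\<in>carrier G. \<exists>(i::int) (j::int). \<exists>d\<in>D. z = x [^] i \<otimes> y [^] j \<otimes> d"
    for x y
  proof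
    fix XX assume "XX \<in> carrier (G Mod D)"
    then obtain z where z: "z \<in> carrier G" and XX: "XX = p z" unfolding carrier_FactGroup p_def by blast
    then obtain i j :: int and d where d: "d \<in> D" and zij: "z = x [^] i \<otimes> y [^] j \<otimes> d" using S by blast
    have dc: "d \<in> carrier G" using d D subgroup.subset by blast
    have m: "p x [^]\<^bsub>G Mod D\<^esub> i \<otimes>\<^bsub>G Mod D\<^esub> p y [^]\<^bsub>G Mod D\<^esub> j \<in> carrier (G Mod D)"
      using pc x y by (simp del: mult_FactGroup one_FactGroup)
    have e0: "p z = p (x [^] i \<otimes> y [^] j) \<otimes>\<^bsub>G Mod D\<^esub> p d"
      using zij x y dc h.hom_mult[of "x [^] i \<otimes> y [^] j" d] by (simp del: mult_FactGroup one_FactGroup)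
    have pd: "p d = \<one>\<^bsub>G Mod D\<^esub>" using pone dc d by simp
    have e1: "p (x [^] i \<otimes> y [^] j) = p x [^]\<^bsub>G Mod D\<^esub> i \<otimes>\<^bsub>G Mod D\<^esub> p y [^]\<^bsub>G Mod D\<^esub> j"
      using h.hom_mult[of "x [^] i" "y [^] j"] ppow x y by (simp del: mult_FactGroup one_FactGroup)
    have "XX = p x [^]\<^bsub>G Mod D\<^esub> i \<otimes>\<^bsub>G Mod D\<^esub> p y [^]\<^bsub>G Mod D\<^esub> j"
      using XX e0 pd e1 Q.r_one[OF m] by (simp del: mult_FactGroup one_FactGroup)
    then show "\<exists>(i::int) (j::int). XX = p x [^]\<^bsub>G Mod D\<^esub> i \<otimes>\<^bsub>G Mod D\<^esub> p y [^]\<^bsub>G Mod D\<^esub> j" by blast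
  qed
  have oQ: "Q.ord (p a) = Q.ord (p b)"
    using Q.ord_eq_int[OF pc[OF c(1)] pc[OF c(3)]] tr[OF c(1) ha] tr[OF c(3) hb] oab by simp
  have ouv: "Q.ord (p u) = Q.ord (p v)"
    by (rule Q.cancel_Q[OF SQ[OF c(1,2) SAE] IQ[OF c(1,2) IAE ha hu] SQ[OF c(3,4) SBE] IQ[OF c(3,4) IBE hb hv]
          pc[OF c(1)] pc[OF c(2)] pc[OF c(3)] pc[OF c(4)] oQ])
  show ?thesis
  proof
    fix k :: int
    have "u [^] k = \<one> \<longleftrightarrow> p u [^]\<^bsub>G Mod D\<^esub> k = \<one>\<^bsub>G Mod D\<^esub>" using tr[OF c(2) hu] by simp
    also have "\<dots> \<longleftrightarrow> int (Q.ord (p u)) dvd k" using Q.int_pow_eq_id[OF pc[OF c(2)]] by simp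
    also have "\<dots> \<longleftrightarrow> int (Q.ord (p v)) dvd k" using ouv by simp
    also have "\<dots> \<longleftrightarrow> p v [^]\<^bsub>G Mod D\<^esub> k = \<one>\<^bsub>G Mod D\<^esub>" using Q.int_pow_eq_id[OF pc[OF c(4)]] by simp
    also have "\<dots> \<longleftrightarrow> v [^] k = \<one>" using tr[OF c(4) hv] by simp
    finally show "u [^] k = \<one> \<longleftrightarrow> v [^] k = \<one>" .
  qed
qed

lemma sg_mult: "x \<otimes>\<^bsub>subgroup_generated E S\<^esub> y = x \<otimes>\<^bsub>E\<^esub> y"
  by (simp add: subgroup_generated_def)
lemma sg_one: "\<one>\<^bsub>subgroup_generated E S\<^esub> = \<one>\<^bsub>E\<^esub>"
  by (simp add: subgroup_generated_def)
lemma sg_set_mult: "P1 <#>\<^bsub>subgroup_generated E S\<^esub> P2 = P1 <#>\<^bsub>E\<^esub> P2"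
  by (simp add: set_mult_def subgroup_generated_def)

lemma (in group) ids_top:
  assumes "internal_direct_sum G A B"
  shows "subgroup A G" "subgroup B G" "A \<inter> B = {\<one>}" "\<forall>x\<in>carrier G. \<exists>y\<in>A. \<exists>z\<in>B. x = y \<otimes> z"
proof -
  show "subgroup A G" "subgroup B G" "A \<inter> B = {\<one>}" using assms unfolding internal_direct_sum_def by auto
  have "A <#> B = carrier G" using assms unfolding internal_direct_sum_def by auto
  then show "\<forall>x\<in>carrier G. \<exists>y\<in>A. \<exists>z\<in>B. x = y \<otimes> z" unfolding set_mult_def by (metis (no_types, lifting) UN_E singletonD)
qed

lemma (in group) ids_sub:
  assumes G: "subgroup G' G" and u: "u \<in> G'"
    and ids: "internal_direct_sum (subgroup_generated G G') (generate G {u}) D"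
  shows "\<forall>x\<in>G'. \<exists>k::int. \<exists>d\<in>D. x = u [^] k \<otimes> d"
    and "\<forall>k::int. u [^] k \<in> D \<longrightarrow> u [^] k = \<one>"
    and "subgroup D (subgroup_generated G G')"
proof -
  have uc: "u \<in> carrier G" using G u subgroup.subset by blast
  have gen: "generate G {u} = {u [^] (k::int) | k. k \<in> UNIV}" by (rule generate_pow[OF uc])
  have c: "carrier (subgroup_generated G G') = G'" using subgroup.carrier_subgroup_generated_subgroup[OF G] .
  from ids have i: "generate G {u} \<inter> D = {\<one>}" and s: "generate G {u} <#> D = G'"
    unfolding internal_direct_sum_def sg_one sg_set_mult c by auto
  show "subgroup D (subgroup_generated G G')" using ids unfolding internal_direct_sum_def by auto
  show "\<forall>x\<in>G'. \<exists>k::int. \<exists>d\<in>D. x = u [^] k \<otimes> d"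
    using s unfolding set_mult_def gen by blast
  show "\<forall>k::int. u [^] k \<in> D \<longrightarrow> u [^] k = \<one>"
    using i unfolding gen by blast
qed

lemma (in comm_group) cyc_gen:
  assumes A: "subgroup A G" and cyc: "cyclic_group (subgroup_generated G A)"
  shows "\<exists>a\<in>A. A = range (\<lambda>n::int. a [^] n)"
proof -
  interpret S: group "subgroup_generated G A" by simp
  have c: "carrier (subgroup_generated G A) = A" using subgroup.carrier_subgroup_generated_subgroup[OF A] .
  obtain a where a: "a \<in> carrier (subgroup_generated G A)"
    and e: "carrier (subgroup_generated G A) = range (\<lambda>n::int. a [^]\<^bsub>subgroup_generated G A\<^esub> n)"
    using cyc S.cyclic_group by blast
  have "range (\<lambda>n::int. a [^]\<^bsub>subgroup_generated G A\<^esub> n) = range (\<lambda>n::int. a [^] n)"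
    using int_pow_subgroup_generated[OF a] by simp
  then have "A = range (\<lambda>n::int. a [^] n)" using e c by simp
  moreover have "a \<in> A" using a c by simp
  ultimately show ?thesis by blast
qed

lemma (in comm_group) iso_gen:
  assumes A: "subgroup A G" and B: "subgroup B G"
    and iso: "subgroup_generated G A \<cong> subgroup_generated G B"
    and a: "a \<in> A" and Aa: "A = range (\<lambda>n::int. a [^] n)"
  shows "\<exists>b\<in>B. B = range (\<lambda>n::int. b [^] n) \<and> (\<forall>k::int. a [^] k = \<one> \<longleftrightarrow> b [^] k = \<one>)"
proof -
  interpret SA: group "subgroup_generated G A" by simp
  interpret SB: group "subgroup_generated G B" by simp
  have cA: "carrier (subgroup_generated G A) = A" using subgroup.carrier_subgroup_generated_subgroup[OF A] .
  have cB: "carrier (subgroup_generated G B) = B" using subgroup.carrier_subgroup_generated_subgroup[OF B] .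
  obtain f where f: "f \<in> iso (subgroup_generated G A) (subgroup_generated G B)"
    using iso unfolding is_iso_def by blast
  have hom: "f \<in> hom (subgroup_generated G A) (subgroup_generated G B)" using f by (simp add: iso_def)
  have bij: "bij_betw f A B" using f cA cB by (simp add: iso_def)
  define b where "b = f a"
  have b: "b \<in> B" using bij_betw_apply[OF bij a] b_def by simp
  have fp: "f (a [^] k) = b [^] k" for k :: int
  proof -
    have "f (a [^]\<^bsub>subgroup_generated G A\<^esub> k) = f a [^]\<^bsub>subgroup_generated G B\<^esub> k"
      using hom_int_pow[OF hom, of a k] a cA by simp
    moreover have "a [^]\<^bsub>subgroup_generated G A\<^esub> k = a [^] k"
      using int_pow_subgroup_generated[of a A k] a cA by simp
    moreover have "b [^]\<^bsub>subgroup_generated G B\<^esub> k = b [^] k"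
      using int_pow_subgroup_generated[of b B k] b cB by simp
    ultimately show ?thesis using b_def by simp
  qed
  have f1: "f \<one> = \<one>"
    using hom_one[OF hom SA.is_group SB.is_group] by (simp add: sg_one)
  have one_A: "\<one> \<in> A" using A subgroup.one_closed by blast
  have akA: "a [^] k \<in> A" for k :: int using Aa by auto
  have "B = f ` A" using bij by (simp add: bij_betw_def)
  also have "\<dots> = range (\<lambda>n::int. b [^] n)" unfolding Aa image_image fp by simp
  finally have Bb: "B = range (\<lambda>n::int. b [^] n)" .
  have "a [^] k = \<one> \<longleftrightarrow> b [^] k = \<one>" for k :: int
  proof
    assume "a [^] k = \<one>" then show "b [^] k = \<one>" using fp[of k] f1 by simp
  next
    assume "b [^] k = \<one>"
    then have "f (a [^] k) = f \<one>" using fp f1 by simp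
    moreover have "inj_on f A" using bij by (simp add: bij_betw_def)
    ultimately show "a [^] k = \<one>" using inj_onD akA one_A by metis
  qed
  then show ?thesis using b Bb by blast
qed

lemma (in comm_group) derive_ord:
  assumes idsA: "internal_direct_sum G A G'" and idsB: "internal_direct_sum G B H"
    and iso: "subgroup_generated G A \<cong> subgroup_generated G B"
    and cyc: "cyclic_group (subgroup_generated G A)"
    and u: "u \<in> G'" and v: "v \<in> H"
    and idsG: "internal_direct_sum (subgroup_generated G G') (generate G {u}) (G' \<inter> H)"
    and idsH: "internal_direct_sum (subgroup_generated G H) (generate G {v}) (G' \<inter> H)"
  shows "\<forall>k::int. u [^] k = \<one> \<longleftrightarrow> v [^] k = \<one>"
proof -
  note tA = ids_top[OF idsA] and tB = ids_top[OF idsB]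
  define D where "D = G' \<inter> H"
  have D: "subgroup D G" unfolding D_def using subgroups_Inter_pair tA(2) tB(2) by blast
  have Dc: "x \<in> D \<Longrightarrow> x \<in> carrier G" for x using D subgroup.subset by blast
  note sG = ids_sub[OF tA(2) u idsG, folded D_def]
  note sH = ids_sub[OF tB(2) v idsH, folded D_def]
  have uc: "u \<in> carrier G" using tA(2) u subgroup.subset by blast
  have vc: "v \<in> carrier G" using tB(2) v subgroup.subset by blast
  obtain a where a: "a \<in> A" and Aa: "A = range (\<lambda>n::int. a [^] n)" using cyc_gen[OF tA(1) cyc] by blast
  obtain b where b: "b \<in> B" and Bb: "B = range (\<lambda>n::int. b [^] n)"
    and oab: "\<forall>k::int. a [^] k = \<one> \<longleftrightarrow> b [^] k = \<one>"
    using iso_gen[OF tA(1) tB(1) iso a Aa] by blast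
  have ac: "a \<in> carrier G" using tA(1) a subgroup.subset by blast
  have bc: "b \<in> carrier G" using tB(1) b subgroup.subset by blast
  have I: "\<forall>(i::int) (j::int). a [^] i \<otimes> u [^] j \<in> D \<longrightarrow> a [^] i = \<one> \<and> u [^] j = \<one>"
    if A': "subgroup A G" and G'': "subgroup G' G" and ac: "a \<in> carrier G" and uc: "u \<in> carrier G"
      and Aa: "A = range (\<lambda>n::int. a [^] n)" and u: "u \<in> G'" and AG: "A \<inter> G' = {\<one>}"
      and DG: "D \<subseteq> G'" and iu: "\<forall>k::int. u [^] k \<in> D \<longrightarrow> u [^] k = \<one>"
    for A G' a u
  proof (intro allI impI)
    fix i j :: int assume d: "a [^] i \<otimes> u [^] j \<in> D"
    have ujG: "u [^] j \<in> G'" using G'' u by (simp add: subgroup_int_pow_closed)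
    have "a [^] i = (a [^] i \<otimes> u [^] j) \<otimes> inv (u [^] j)" using ac uc by (simp add: m_assoc)
    also have "\<dots> \<in> G'"
    proof -
      have "a [^] i \<otimes> u [^] j \<in> G'" using d DG by blast
      then show ?thesis using subgroup.m_closed[OF G'' _ subgroup.m_inv_closed[OF G'' ujG]] by blast
    qed
    finally have "a [^] i \<in> A \<inter> G'" using Aa by auto
    then have ai: "a [^] i = \<one>" using AG by auto
    then have "u [^] j \<in> D" using d uc by simp
    then show "a [^] i = \<one> \<and> u [^] j = \<one>" using ai iu by blast
  qed
  have S: "\<forall>x\<in>carrier G. \<exists>(i::int) (j::int). \<exists>d\<in>D. x = a [^] i \<otimes> u [^] j \<otimes> d"
    if sp: "\<forall>x\<in>carrier G. \<exists>y\<in>A. \<exists>z\<in>G'. x = y \<otimes> z" and ac: "a \<in> carrier G" and uc: "u \<in> carrier G"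
      and Aa: "A = range (\<lambda>n::int. a [^] n)"
      and sg: "\<forall>x\<in>G'. \<exists>k::int. \<exists>d\<in>D. x = u [^] k \<otimes> d"
    for A G' a u
  proof
    fix x assume "x \<in> carrier G"
    then obtain y z where y: "y \<in> A" and z: "z \<in> G'" and xyz: "x = y \<otimes> z" using sp by blast
    obtain i :: int where yi: "y = a [^] i" using y Aa by auto
    obtain j :: int and d where d: "d \<in> D" and zj: "z = u [^] j \<otimes> d" using sg z by blast
    have "x = a [^] i \<otimes> u [^] j \<otimes> d" using xyz yi zj ac uc Dc[OF d] by (simp add: m_assoc)
    then show "\<exists>(i::int) (j::int). \<exists>d\<in>D. x = a [^] i \<otimes> u [^] j \<otimes> d" using d by blast
  qed
  have DG: "D \<subseteq> G'" and DH: "D \<subseteq> H" unfolding D_def by auto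
  show ?thesis
    by (rule cancel_E[OF D ac uc bc vc I[OF tA(1) tA(2) ac uc Aa u tA(3) DG sG(2)]
          S[OF tA(4) ac uc Aa sG(1)] I[OF tB(1) tB(2) bc vc Bb v tB(3) DH sH(2)]
          S[OF tB(4) bc vc Bb sH(1)] oab])
qed

definition sig :: "recf \<Rightarrow> recf \<Rightarrow> nat \<Rightarrow> nat \<Rightarrow> nat \<Rightarrow> recf" where
  "sig pm ph u v i = (if i = 0 then pm else if i = 1 then ph else if i = 2 then K u else K v)"

lemma main_all:
  fixes G :: "nat monoid" (structure)
  assumes cg: "comm_group G" and idsA: "internal_direct_sum G A G'" and idsB: "internal_direct_sum G B H"
    and iso: "subgroup_generated G A \<cong> subgroup_generated G B"
    and cyc: "cyclic_group (subgroup_generated G A)"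
    and u: "u \<in> G'" and v: "v \<in> H"
    and idsG: "internal_direct_sum (subgroup_generated G G') (generate G {u}) (G' \<inter> H)"
    and idsH: "internal_direct_sum (subgroup_generated G H) (generate G {v}) (G' \<inter> H)"
    and hm: "\<And>a b c. eval pm [a, b, c] (if a \<in> carrier G \<and> b \<in> carrier G \<and> c \<in> carrier G \<and> a \<otimes> b = c then 1 else 0)"
    and hh: "\<And>y. eval ph [y] (if y \<in> H then 1 else 0)"
  shows "\<exists>f. f \<in> iso (subgroup_generated G G') (subgroup_generated G H) \<and>
           (\<forall>x\<in>G'. eval (inst (sig pm ph u v) Tt) [x] (f x))"
proof -
  interpret comm_group G by (rule cg)
  note tA = ids_top[OF idsA] and tB = ids_top[OF idsB]
  note sG = ids_sub[OF tA(2) u idsG] and sH = ids_sub[OF tB(2) v idsH]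
  have uc: "u \<in> carrier G" using tA(2) u subgroup.subset by blast
  have vc: "v \<in> carrier G" using tB(2) v subgroup.subset by blast
  have spanG: "\<forall>x\<in>G'. \<exists>k::int. \<exists>d\<in>G' \<inter> H. x = u [^] k \<otimes> d" using sG(1) .
  have indepU: "\<forall>k::int. u [^] k \<in> H \<longrightarrow> u [^] k = \<one>"
    using sG(2) tA(2) u by (simp add: subgroup_int_pow_closed)
  have spanH: "\<forall>x\<in>H. \<exists>k::int. \<exists>d\<in>H \<inter> G'. x = v [^] k \<otimes> d" using sH(1) by (simp add: Int_commute)
  have indepV: "\<forall>k::int. v [^] k \<in> G' \<longrightarrow> v [^] k = \<one>"
    using sH(2) tB(2) v by (simp add: subgroup_int_pow_closed)
  have ord: "\<forall>k::int. u [^] k = \<one> \<longleftrightarrow> v [^] k = \<one>"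
    by (rule derive_ord[OF idsA idsB iso cyc u v idsG idsH])
  define w where "w = u \<otimes> inv v"
  have wc: "w \<in> carrier G" using uc vc w_def by simp
  define f where "f = (\<lambda>x. THE y. y \<in> H \<and> (\<exists>m::int. y = x \<otimes> (u \<otimes> inv v) [^] m))"
  have fiso: "f \<in> iso (subgroup_generated G G') (subgroup_generated G H)"
    unfolding f_def by (rule iso_GH[OF tA(2) tB(2) u v spanG indepU spanH indepV ord])
  interpret pc: progctx G H "sig pm ph u v" u v
    by (unfold_locales) (auto simp: sig_def hm hh is_group uc vc)
  have main: "eval (inst (sig pm ph u v) Tt) [x] (f x)" if x: "x \<in> G'" for x
  proof -
    have xc: "x \<in> carrier G" using x tA(2) subgroup.subset by blast
    have U: "\<exists>!y. y \<in> H \<and> (\<exists>m::int. y = x \<otimes> (u \<otimes> inv v) [^] m)"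
      by (rule key_unique[OF tA(2) tB(2) u v spanG indepU ord x])
    then obtain y0 m where y0: "y0 \<in> H" and y0m: "y0 = x \<otimes> w [^] (m::int)" unfolding w_def by blast
    have pw: "w [^] (int n) = w [^] n" for n :: nat by (simp add: int_pow_int)
    have pw': "(v \<otimes> inv u) [^] n = w [^] (- int n)" for n :: nat
      using vu_pow[OF uc vc, of "int n"] unfolding w_def by (simp add: int_pow_int)
    have ex: "\<exists>n::nat. x \<otimes> (u \<otimes> inv v) [^] n \<in> H \<or> x \<otimes> (v \<otimes> inv u) [^] n \<in> H"
    proof (cases "m \<ge> 0")
      case True
      then have "w [^] m = w [^] (nat m)" using pw[of "nat m"] by simp
      then show ?thesis using y0 y0m unfolding w_def by metis
    next
      case False
      then have "w [^] m = (v \<otimes> inv u) [^] (nat (-m))" using pw'[of "nat (-m)"] by simp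
      then show ?thesis using y0 y0m unfolding w_def by metis
    qed
    obtain n :: nat and y where ev: "eval (inst (sig pm ph u v) Tt) [x] y" and yH: "y \<in> H"
      and yn: "y = x \<otimes> (u \<otimes> inv v) [^] n \<or> y = x \<otimes> (v \<otimes> inv u) [^] n"
      using pc.eval_T[OF xc ex] by blast
    have "\<exists>m::int. y = x \<otimes> (u \<otimes> inv v) [^] m"
      using yn pw pw' unfolding w_def by metis
    then have "f x = y" unfolding f_def using the1_equality[OF U] yH by blast
    then show ?thesis using ev by simp
  qed
  show ?thesis using fiso main by blast
qed

lemma phi_uniform:
  assumes "\<And>x. phi e (h x) (g x)"
  shows "\<exists>p. code p = e \<and> (\<forall>x. eval p (h x) (g x))"
proof -
  obtain p where p: "code p = e" using assms unfolding phi_def by blast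
  have "eval p (h x) (g x)" for x
  proof -
    obtain q where "code q = e" "eval q (h x) (g x)" using assms[of x] unfolding phi_def by blast
    then show ?thesis using p code_inj by metis
  qed
  then show ?thesis using p by blast
qed

definition CC :: recf where
  "CC = Comp (cp Tt) [Comp SNDDEC [Proj 0], Proj 4, Comp CK [Proj 5], Comp CK [Proj 6]]"

theorem lemma2p4:
  "\<exists>c. \<forall>(E :: nat monoid) eE eA eB eG eH A B G H u v.
     group_index eE E \<and> comm_group E \<and>
     char_index eA A \<and> char_index eB B \<and> char_index eG G \<and> char_index eH H \<and>
     internal_direct_sum E A G \<and> internal_direct_sum E B H \<and>
     subgroup_generated E A \<cong> subgroup_generated E B \<and>
     cyclic_group (subgroup_generated E A) \<and> cyclic_group (subgroup_generated E B) \<and>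
     u \<in> G \<and> v \<in> H \<and>
     internal_direct_sum (subgroup_generated E G) (generate E {u}) (G \<inter> H) \<and>
     internal_direct_sum (subgroup_generated E H) (generate E {v}) (G \<inter> H)
     \<longrightarrow> (\<exists>n. phi c [eE, eA, eB, eG, eH, u, v] n \<and>
            (\<exists>f. f \<in> iso (subgroup_generated E G) (subgroup_generated E H) \<and>
                 (\<forall>x \<in> G. phi n [x] (f x))))"
proof (rule exI[of _ "code CC"], intro allI impI)
  fix E :: "nat monoid" and eE eA eB eG eH A B G H u v
  assume h: "group_index eE E \<and> comm_group E \<and>
     char_index eA A \<and> char_index eB B \<and> char_index eG G \<and> char_index eH H \<and>
     internal_direct_sum E A G \<and> internal_direct_sum E B H \<and>
     subgroup_generated E A \<cong> subgroup_generated E B \<and>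
     cyclic_group (subgroup_generated E A) \<and> cyclic_group (subgroup_generated E B) \<and>
     u \<in> G \<and> v \<in> H \<and>
     internal_direct_sum (subgroup_generated E G) (generate E {u}) (G \<inter> H) \<and>
     internal_direct_sum (subgroup_generated E H) (generate E {v}) (G \<inter> H)"
  interpret E: comm_group E using h by blast
  define m where "m = snd (prod_decode eE)"
  define hf :: "nat \<times> nat \<times> nat \<Rightarrow> nat list" where "hf = (\<lambda>(x, y, z). [x, y, z])"
  define gf :: "nat \<times> nat \<times> nat \<Rightarrow> nat" where
    "gf = (\<lambda>(x, y, z). (if x \<in> carrier E \<and> y \<in> carrier E \<and> z \<in> carrier E \<and> x \<otimes>\<^bsub>E\<^esub> y = z then 1 else 0))"
  have hm0: "phi m (hf t) (gf t)" for t
    using h unfolding group_index_def m_def hf_def gf_def by (cases t) auto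
  obtain pm where pm: "code pm = m" and hm1: "\<forall>t. eval pm (hf t) (gf t)"
    using phi_uniform[of m hf gf, OF hm0] by blast
  have hm: "eval pm [a, b, c] (if a \<in> carrier E \<and> b \<in> carrier E \<and> c \<in> carrier E \<and> a \<otimes>\<^bsub>E\<^esub> b = c then 1 else 0)" for a b c
    using hm1[rule_format, of "(a, b, c)"] unfolding hf_def gf_def by simp
  have hh0: "phi eH [y] (if y \<in> H then 1 else 0)" for y
    using h unfolding char_index_def by blast
  obtain ph where ph: "code ph = eH" and hh: "\<forall>y. eval ph [y] (if y \<in> H then 1 else 0)"
    using phi_uniform[of eH "\<lambda>y. [y]", OF hh0] by blast
  obtain f where fiso: "f \<in> iso (subgroup_generated E G) (subgroup_generated E H)"
    and fev: "\<forall>x\<in>G. eval (inst (sig pm ph u v) Tt) [x] (f x)"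
    using main_all[of E A G B H u v pm ph] h hm hh by blast
  define n where "n = code (inst (sig pm ph u v) Tt)"
  have evC: "eval CC [eE, eA, eB, eG, eH, u, v] n"
  proof -
    let ?hs = "[snd (prod_decode eE), eH, code (K u), code (K v)]"
    have hs: "\<forall>i\<in>holes Tt. i < length ?hs \<and> ?hs ! i = code (sig pm ph u v i)"
    proof
      fix i assume "i \<in> holes Tt"
      then have "i \<in> {0,1,2,3}" using holes_Tt by blast
      then show "i < length ?hs \<and> ?hs ! i = code (sig pm ph u v i)"
        using pm ph m_def by (auto simp: sig_def)
    qed
    show ?thesis unfolding CC_def n_def
      by (rule comp4[OF comp1[OF proj eval_SNDDEC] proj comp1[OF proj eval_CK] comp1[OF proj eval_CK] eval_cp[OF hs]])
        (auto simp: m_def)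
  qed
  have "phi (code CC) [eE, eA, eB, eG, eH, u, v] n" unfolding phi_def using evC by blast
  moreover have "\<forall>x\<in>G. phi n [x] (f x)" unfolding phi_def n_def using fev by blast
  ultimately show "\<exists>n. phi (code CC) [eE, eA, eB, eG, eH, u, v] n \<and>
            (\<exists>f. f \<in> iso (subgroup_generated E G) (subgroup_generated E H) \<and>
                 (\<forall>x \<in> G. phi n [x] (f x)))" using fiso by blast
qed

end
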